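(* Let $\mathcal B$ be a weak $\mathfrak b$-scale, $s\in\omega^{<\omega}$ and $f\in\mathcal B$. (1) If $s\in U(f)$, then $s^\frown\triangle_{f(s)}\subseteq U(f)$, where $s^\frown F=\{s^\frown z: z\in F\}$. (2) The set $\{g\in\mathcal B: s\in U(g)\}$ is cofinal in $(\mathcal B,\le^* )$.
   Context: For $m\in\omega$ let $\triangle_m=m^{\le m}$ (finite sequences of length at most $m$ with entries $<m$). A function $f:\omega^{<\omega}\to\omega$ is increasing if $f(s)<f(t)$ whenever $s$ is a proper initial segment of $t$, and $f(s^\frown n)<f(s^\frown m)$ whenever $n<m$. For $f,g:\omega^{<\omega}\to\omega$, $f\le^* g$ means $f(s)\le g(s)$ for all but finitely many $s$. A family $\mathcal B$ of functions $\omega^{<\omega}\to\omega$ is a weak $\mathfrak b$-scale if (a) every member is increasing, (b) there is no $g$ with $f\le^* g$ for all $f\in\mathcal B$, (c) $\mathcal B$ is well-ordered by $\le^*$, (d) for every $n\in\omega$ the set $\{f\in\mathcal B: n<f(\emptyset)\}$ is cofinal in $(\mathcal B,\le^* )$. For $f:\omega^{<\omega}\to\omega$, $U(f)\subseteq\omega^{<\omega}$ is the tree defined by: $\emptyset\in U(f)$, and for $s\in U(f)$, $s^\frown k\in U(f)$ iff $k\ne f(s)$. *)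

theory Defs
  imports Main "HOL-Library.Sublist"
begin

(* omega^{<omega} is rendered as nat list; s^t is s @ t. *)

definition triangle :: "nat \<Rightarrow> nat list set" where
  "triangle m = {z. length z \<le> m \<and> (\<forall>x\<in>set z. x < m)}"

definition increasing :: "(nat list \<Rightarrow> nat) \<Rightarrow> bool" where
  "increasing f \<longleftrightarrow>
     (\<forall>s t. strict_prefix s t \<longrightarrow> f s < f t) \<and>
     (\<forall>s n m. n < m \<longrightarrow> f (s @ [n]) < f (s @ [m]))"

definition le_star :: "(nat list \<Rightarrow> nat) \<Rightarrow> (nat list \<Rightarrow> nat) \<Rightarrow> bool" where
  "le_star f g \<longleftrightarrow> finite {s. \<not> f s \<le> g s}"

definition le_star_rel :: "(nat list \<Rightarrow> nat) set \<Rightarrow> ((nat list \<Rightarrow> nat) \<times> (nat list \<Rightarrow> nat)) set" where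
  "le_star_rel B = {(f, g). f \<in> B \<and> g \<in> B \<and> le_star f g}"

definition cofinal_in :: "(nat list \<Rightarrow> nat) set \<Rightarrow> (nat list \<Rightarrow> nat) set \<Rightarrow> bool" where
  "cofinal_in C B \<longleftrightarrow> C \<subseteq> B \<and> (\<forall>f\<in>B. \<exists>g\<in>C. le_star f g)"

definition weak_b_scale :: "(nat list \<Rightarrow> nat) set \<Rightarrow> bool" where
  "weak_b_scale B \<longleftrightarrow>
     (\<forall>f\<in>B. increasing f) \<and>
     \<not> (\<exists>g. \<forall>f\<in>B. le_star f g) \<and>
     well_order_on B (le_star_rel B) \<and>
     (\<forall>n. cofinal_in {f\<in>B. n < f []} B)"

inductive_set U :: "(nat list \<Rightarrow> nat) \<Rightarrow> nat list set" for f where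
  U_Nil: "[] \<in> U f"
| U_snoc: "s \<in> U f \<Longrightarrow> k \<noteq> f s \<Longrightarrow> s @ [k] \<in> U f"

end

theory Submission
  imports Defs
begin

lemma inc_prefix_le:
  assumes "increasing g" "prefix a b" shows "g a \<le> g b"
proof (cases "a = b")
  case False
  then have "strict_prefix a b" using assms(2) by (simp add: strict_prefix_def)
  then show ?thesis using assms(1) unfolding increasing_def by (simp add: less_imp_le)
qed simp

lemma U_ext:
  assumes "increasing g" "s \<in> U g" "\<forall>x\<in>set z. x < g s"
  shows "s @ z \<in> U g"
  using assms(3)
proof (induction z rule: rev_induct)
  case Nil then show ?case using assms(2) by simp
next
  case (snoc k z)
  then have IH: "s @ z \<in> U g" by simp
  have "g s \<le> g (s @ z)" using inc_prefix_le[OF assms(1)] by simp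
  moreover have "k < g s" using snoc.prems by simp
  ultimately have "k \<noteq> g (s @ z)" by simp
  then show ?case using U.U_snoc[OF IH] by simp
qed

theorem lemma22:
  fixes B :: "(nat list \<Rightarrow> nat) set" and s :: "nat list" and f :: "nat list \<Rightarrow> nat"
  assumes "weak_b_scale B" and "f \<in> B"
  shows "(s \<in> U f \<longrightarrow> (\<lambda>z. s @ z) ` triangle (f s) \<subseteq> U f)
         \<and> cofinal_in {g\<in>B. s \<in> U g} B"
proof
  have inc: "\<And>g. g \<in> B \<Longrightarrow> increasing g" using assms(1) unfolding weak_b_scale_def by blast
  show "s \<in> U f \<longrightarrow> (\<lambda>z. s @ z) ` triangle (f s) \<subseteq> U f"
    using U_ext[OF inc[OF assms(2)]] unfolding triangle_def by blast
  define n where "n = Max (insert 0 (set s))"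
  have cof: "cofinal_in {g\<in>B. n < g []} B" using assms(1) unfolding weak_b_scale_def by blast
  show "cofinal_in {g\<in>B. s \<in> U g} B"
    unfolding cofinal_in_def
  proof (intro conjI ballI)
    fix h assume "h \<in> B"
    then obtain g where g: "g \<in> B" "n < g []" "le_star h g" using cof unfolding cofinal_in_def by blast
    have "\<forall>x\<in>set s. x < g []"
    proof
      fix x assume "x \<in> set s"
      then have "x \<le> n" unfolding n_def by simp
      then show "x < g []" using g(2) by simp
    qed
    then have "[] @ s \<in> U g" using U_ext[OF inc[OF g(1)] U.U_Nil] by blast
    then show "\<exists>g'\<in>{g \<in> B. s \<in> U g}. le_star h g'" using g by auto
  qed auto
qed

end
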